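(* Let $(\mathbf A,\tau)$ be a state-morphism algebra. If $x,y\in\tau(A)$, then $\Theta(x,y)=\Theta_\tau(x,y)$. Consequently, $\Theta(\phi)=\Theta_\tau(\phi)$ whenever $\phi\subseteq\tau(A)^2$.
   Context: Let $F$ be an arbitrary algebraic type. A state-morphism on an algebra $\mathbf A$ of type $F$ is an endomorphism $\tau:\mathbf A\to\mathbf A$ with $\tau\circ\tau=\tau$; $(\mathbf A,\tau)$, viewed as an algebra of type $F$ extended by the unary operation $\tau$, is a state-morphism algebra. $\tau(A)=\{\tau(x):x\in A\}$. For $\phi\subseteq A^2$, $\Theta(\phi)$ is the congruence of $\mathbf A$ generated by $\phi$ and $\Theta_\tau(\phi)$ the congruence of $(\mathbf A,\tau)$ generated by $\phi$; $\Theta(x,y)=\Theta(\{(x,y)\})$, similarly $\Theta_\tau(x,y)$. *)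

theory Defs
  imports Main
begin

text \<open>An algebra of type F: carrier A, set of operation symbols Fs,
  arity function ar, and interpretation ops (an operation symbol f of arity
  ar f is applied to argument lists of length ar f).\<close>

definition is_algebra ::
  "'a set \<Rightarrow> 'f set \<Rightarrow> ('f \<Rightarrow> nat) \<Rightarrow> ('f \<Rightarrow> 'a list \<Rightarrow> 'a) \<Rightarrow> bool" where
  "is_algebra A Fs ar ops \<longleftrightarrow>
     (\<forall>f\<in>Fs. \<forall>xs. length xs = ar f \<and> set xs \<subseteq> A \<longrightarrow> ops f xs \<in> A)"

definition endomorphism ::
  "'a set \<Rightarrow> 'f set \<Rightarrow> ('f \<Rightarrow> nat) \<Rightarrow> ('f \<Rightarrow> 'a list \<Rightarrow> 'a) \<Rightarrow> ('a \<Rightarrow> 'a) \<Rightarrow> bool" where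
  "endomorphism A Fs ar ops \<tau> \<longleftrightarrow>
     \<tau> ` A \<subseteq> A \<and>
     (\<forall>f\<in>Fs. \<forall>xs. length xs = ar f \<and> set xs \<subseteq> A \<longrightarrow> \<tau> (ops f xs) = ops f (map \<tau> xs))"

definition state_morphism ::
  "'a set \<Rightarrow> 'f set \<Rightarrow> ('f \<Rightarrow> nat) \<Rightarrow> ('f \<Rightarrow> 'a list \<Rightarrow> 'a) \<Rightarrow> ('a \<Rightarrow> 'a) \<Rightarrow> bool" where
  "state_morphism A Fs ar ops \<tau> \<longleftrightarrow>
     endomorphism A Fs ar ops \<tau> \<and> (\<forall>x\<in>A. \<tau> (\<tau> x) = \<tau> x)"

definition compatible ::
  "'a set \<Rightarrow> 'f set \<Rightarrow> ('f \<Rightarrow> nat) \<Rightarrow> ('f \<Rightarrow> 'a list \<Rightarrow> 'a) \<Rightarrow> ('a \<times> 'a) set \<Rightarrow> bool" where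
  "compatible A Fs ar ops R \<longleftrightarrow>
     (\<forall>f\<in>Fs. \<forall>xs ys. length xs = ar f \<and> length ys = ar f \<and> set xs \<subseteq> A \<and> set ys \<subseteq> A
        \<and> list_all2 (\<lambda>a b. (a, b) \<in> R) xs ys \<longrightarrow> (ops f xs, ops f ys) \<in> R)"

definition congruence ::
  "'a set \<Rightarrow> 'f set \<Rightarrow> ('f \<Rightarrow> nat) \<Rightarrow> ('f \<Rightarrow> 'a list \<Rightarrow> 'a) \<Rightarrow> ('a \<times> 'a) set \<Rightarrow> bool" where
  "congruence A Fs ar ops R \<longleftrightarrow> equiv A R \<and> compatible A Fs ar ops R"

definition congruence_tau ::
  "'a set \<Rightarrow> 'f set \<Rightarrow> ('f \<Rightarrow> nat) \<Rightarrow> ('f \<Rightarrow> 'a list \<Rightarrow> 'a) \<Rightarrow> ('a \<Rightarrow> 'a) \<Rightarrow> ('a \<times> 'a) set \<Rightarrow> bool" where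
  "congruence_tau A Fs ar ops \<tau> R \<longleftrightarrow>
     congruence A Fs ar ops R \<and> (\<forall>(a, b)\<in>R. (\<tau> a, \<tau> b) \<in> R)"

definition Cg ::
  "'a set \<Rightarrow> 'f set \<Rightarrow> ('f \<Rightarrow> nat) \<Rightarrow> ('f \<Rightarrow> 'a list \<Rightarrow> 'a) \<Rightarrow> ('a \<times> 'a) set \<Rightarrow> ('a \<times> 'a) set" where
  "Cg A Fs ar ops \<phi> = \<Inter> {R. congruence A Fs ar ops R \<and> \<phi> \<subseteq> R}"

definition Cg_tau ::
  "'a set \<Rightarrow> 'f set \<Rightarrow> ('f \<Rightarrow> nat) \<Rightarrow> ('f \<Rightarrow> 'a list \<Rightarrow> 'a) \<Rightarrow> ('a \<Rightarrow> 'a) \<Rightarrow> ('a \<times> 'a) set \<Rightarrow> ('a \<times> 'a) set" where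
  "Cg_tau A Fs ar ops \<tau> \<phi> = \<Inter> {R. congruence_tau A Fs ar ops \<tau> R \<and> \<phi> \<subseteq> R}"

end

theory Submission
  imports Defs
begin

lemma cong_full:
  assumes "is_algebra A Fs ar ops"
  shows "congruence A Fs ar ops (A \<times> A)"
  using assms unfolding congruence_def compatible_def is_algebra_def equiv_def refl_on_def sym_def trans_def
  by auto

lemma Cg_cong:
  assumes "is_algebra A Fs ar ops" and "\<phi> \<subseteq> A \<times> A"
  shows "congruence A Fs ar ops (Cg A Fs ar ops \<phi>)"
proof -
  let ?S = "{R. congruence A Fs ar ops R \<and> \<phi> \<subseteq> R}"
  have ne: "A \<times> A \<in> ?S" using cong_full[OF assms(1)] assms(2) by auto
  have sub: "\<Inter>?S \<subseteq> A \<times> A" using ne by blast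
  have "equiv A (\<Inter>?S)"
    unfolding equiv_def refl_on_def sym_def trans_def
  proof (intro conjI allI impI ballI)
    show "\<Inter>?S \<subseteq> A \<times> A" by (rule sub)
  next
    fix x assume "x \<in> A" then show "(x, x) \<in> \<Inter>?S"
      by (auto simp: congruence_def equiv_def refl_on_def)
  next
    fix x y assume "(x, y) \<in> \<Inter>?S" then show "(y, x) \<in> \<Inter>?S"
      by (auto simp: congruence_def equiv_def sym_def)
  next
    fix x y z assume "(x, y) \<in> \<Inter>?S" "(y, z) \<in> \<Inter>?S" then show "(x, z) \<in> \<Inter>?S"
      unfolding congruence_def equiv_def trans_def by blast
  qed
  moreover have "compatible A Fs ar ops (\<Inter>?S)"
    unfolding compatible_def
  proof (intro ballI allI impI)
    fix f xs ys assume f: "f \<in> Fs" and h: "length xs = ar f \<and> length ys = ar f \<and> set xs \<subseteq> A \<and> set ys \<subseteq> A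
        \<and> list_all2 (\<lambda>a b. (a, b) \<in> \<Inter>?S) xs ys"
    show "(ops f xs, ops f ys) \<in> \<Inter>?S"
    proof
      fix R assume R: "R \<in> ?S"
      have "list_all2 (\<lambda>a b. (a, b) \<in> R) xs ys"
        using h R by (auto elim: list_all2_mono)
      then show "(ops f xs, ops f ys) \<in> R"
        using R f h unfolding congruence_def compatible_def by blast
    qed
  qed
  ultimately show ?thesis unfolding Cg_def congruence_def by blast
qed

lemma Cg_upper: "\<phi> \<subseteq> Cg A Fs ar ops \<phi>"
  unfolding Cg_def by blast

lemma Cg_least: "congruence A Fs ar ops R \<Longrightarrow> \<phi> \<subseteq> R \<Longrightarrow> Cg A Fs ar ops \<phi> \<subseteq> R"
  unfolding Cg_def by blast

lemma main:
  assumes alg: "is_algebra A Fs ar ops"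
    and sm: "state_morphism A Fs ar ops \<tau>"
    and phi: "\<phi> \<subseteq> \<tau> ` A \<times> \<tau> ` A"
  shows "Cg A Fs ar ops \<phi> = Cg_tau A Fs ar ops \<tau> \<phi>"
proof -
  have tA: "\<tau> ` A \<subseteq> A" and hom: "\<forall>f\<in>Fs. \<forall>xs. length xs = ar f \<and> set xs \<subseteq> A \<longrightarrow> \<tau> (ops f xs) = ops f (map \<tau> xs)"
    and idem: "\<forall>x\<in>A. \<tau> (\<tau> x) = \<tau> x"
    using sm unfolding state_morphism_def endomorphism_def by auto
  have phiA: "\<phi> \<subseteq> A \<times> A" using phi tA by blast
  let ?C = "Cg A Fs ar ops \<phi>"
  have C: "congruence A Fs ar ops ?C" by (rule Cg_cong[OF alg phiA])
  have CA: "?C \<subseteq> A \<times> A" using C unfolding congruence_def equiv_def refl_on_def by blast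
  let ?R = "{(a, b). a \<in> A \<and> b \<in> A \<and> (\<tau> a, \<tau> b) \<in> ?C}"
  have Ceq: "equiv A ?C" using C unfolding congruence_def by blast
  have "equiv A ?R"
    unfolding equiv_def refl_on_def sym_def trans_def
  proof (intro conjI allI impI ballI)
    show "?R \<subseteq> A \<times> A" by blast
  next
    fix x assume "x \<in> A" then show "(x, x) \<in> ?R"
      using Ceq tA unfolding equiv_def refl_on_def by blast
  next
    fix x y assume "(x, y) \<in> ?R" then show "(y, x) \<in> ?R"
      using Ceq unfolding equiv_def sym_def by blast
  next
    fix x y z assume "(x, y) \<in> ?R" "(y, z) \<in> ?R" then show "(x, z) \<in> ?R"
      using Ceq unfolding equiv_def trans_def by blast
  qed
  moreover have "compatible A Fs ar ops ?R"
    unfolding compatible_def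
  proof (intro ballI allI impI)
    fix f xs ys assume f: "f \<in> Fs" and h: "length xs = ar f \<and> length ys = ar f \<and> set xs \<subseteq> A \<and> set ys \<subseteq> A
        \<and> list_all2 (\<lambda>a b. (a, b) \<in> ?R) xs ys"
    have l2: "list_all2 (\<lambda>a b. (a, b) \<in> ?C) (map \<tau> xs) (map \<tau> ys)"
      using h by (auto simp: list_all2_map1 list_all2_map2 elim: list_all2_mono)
    have s: "set (map \<tau> xs) \<subseteq> A" "set (map \<tau> ys) \<subseteq> A" using h tA by auto
    have "(ops f (map \<tau> xs), ops f (map \<tau> ys)) \<in> ?C"
      using C f h l2 s unfolding congruence_def compatible_def by simp
    moreover have "ops f xs \<in> A" "ops f ys \<in> A" using alg f h unfolding is_algebra_def by auto
    ultimately show "(ops f xs, ops f ys) \<in> ?R" using hom f h by simp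
  qed
  moreover have "\<phi> \<subseteq> ?R"
  proof
    fix p assume p: "p \<in> \<phi>"
    then obtain a b where ab: "p = (\<tau> a, \<tau> b)" "a \<in> A" "b \<in> A" using phi by blast
    have "(\<tau> a, \<tau> b) \<in> ?C" using p ab Cg_upper by blast
    then show "p \<in> ?R" using ab idem tA by auto
  qed
  ultimately have "?C \<subseteq> ?R" using Cg_least unfolding congruence_def by blast
  then have Ct: "congruence_tau A Fs ar ops \<tau> ?C"
    using C unfolding congruence_tau_def by blast
  show ?thesis
  proof
    show "?C \<subseteq> Cg_tau A Fs ar ops \<tau> \<phi>"
      unfolding Cg_tau_def Cg_def congruence_tau_def by blast
    show "Cg_tau A Fs ar ops \<tau> \<phi> \<subseteq> ?C"
      using Ct Cg_upper[of \<phi>] unfolding Cg_tau_def by blast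
  qed
qed

theorem lemma3p4:
  fixes A :: "'a set" and Fs :: "'f set" and ar :: "'f \<Rightarrow> nat"
    and ops :: "'f \<Rightarrow> 'a list \<Rightarrow> 'a" and \<tau> :: "'a \<Rightarrow> 'a"
  assumes "is_algebra A Fs ar ops"
    and "state_morphism A Fs ar ops \<tau>"
  shows "(\<forall>x\<in>\<tau> ` A. \<forall>y\<in>\<tau> ` A.
            Cg A Fs ar ops {(x, y)} = Cg_tau A Fs ar ops \<tau> {(x, y)})
       \<and> (\<forall>\<phi>. \<phi> \<subseteq> \<tau> ` A \<times> \<tau> ` A \<longrightarrow> Cg A Fs ar ops \<phi> = Cg_tau A Fs ar ops \<tau> \<phi>)"
  using main[OF assms] by auto

end
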